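(* Let $b>1$, $p\ge1$, $R\subseteq\{0,\ldots,p-1\}$, and $I\subseteq\mathbb{N}$ finite and non-empty. The initial state of $\mathcal{C}_{R,p,I}$ is not ultimately-equivalent to any other state of $\mathcal{C}_{R,p,I}$.
   Context: $A_b=\{0,\ldots,b-1\}$. $\mathcal{A}_{R,p}$: states $\{0,\ldots,p-1\}$, initial $0$, final $R$, transitions $n\xrightarrow{a}(nb+a)\bmod p$. With $m=\max I$, $\mathcal{B}_I$: states $\{0,\ldots,m\}\cup\{\bot\}$, initial $0$, final $I$, transitions $i\xrightarrow{a}ib+a$ if $ib+a\le m$, else $i\xrightarrow{a}\bot$, and $\bot\xrightarrow{a}\bot$. $\mathcal{C}_{R,p,I}$ is the accessible part (states reachable from the initial state $(0,0)$) of the product of $\mathcal{A}_{R,p}$ and $\mathcal{B}_I$, with componentwise transitions and $(s,t)$ final iff exactly one of $s\in R$, $t\in I$ holds. Two states $x,y$ are ultimately-equivalent if there is $m\ge1$ with $x\cdot u=y\cdot u$ for all words $u$ with $|u|\ge m$. *)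

theory Defs
  imports Main
begin

text \<open>Words over the alphabet A_b = {0,...,b-1} are lists of naturals with all letters < b.
  The state bottom of B_I is represented by None, state i by Some i.\<close>

definition words :: "nat \<Rightarrow> nat list set" where
  "words b = {w. set w \<subseteq> {..<b}}"

definition stepA :: "nat \<Rightarrow> nat \<Rightarrow> nat \<Rightarrow> nat \<Rightarrow> nat" where
  "stepA b p n a = (n * b + a) mod p"

definition stepB :: "nat \<Rightarrow> nat \<Rightarrow> nat option \<Rightarrow> nat \<Rightarrow> nat option" where
  "stepB b m t a = (case t of None \<Rightarrow> None
                    | Some i \<Rightarrow> (if i * b + a \<le> m then Some (i * b + a) else None))"

definition stepC :: "nat \<Rightarrow> nat \<Rightarrow> nat set \<Rightarrow> nat \<times> nat option \<Rightarrow> nat \<Rightarrow> nat \<times> nat option" where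
  "stepC b p I q a = (stepA b p (fst q) a, stepB b (Max I) (snd q) a)"

definition runC :: "nat \<Rightarrow> nat \<Rightarrow> nat set \<Rightarrow> nat \<times> nat option \<Rightarrow> nat list \<Rightarrow> nat \<times> nat option" where
  "runC b p I q u = foldl (stepC b p I) q u"

definition initC :: "nat \<times> nat option" where
  "initC = (0, Some 0)"

definition statesC :: "nat \<Rightarrow> nat \<Rightarrow> nat set \<Rightarrow> (nat \<times> nat option) set" where
  "statesC b p I = {runC b p I initC w | w. w \<in> words b}"

text \<open>Final states (exactly one of s in R, t in I); not needed for the statement.\<close>
definition finalC :: "nat set \<Rightarrow> nat set \<Rightarrow> nat \<times> nat option \<Rightarrow> bool" where
  "finalC R I q = ((fst q \<in> R) \<noteq> (case snd q of None \<Rightarrow> False | Some t \<Rightarrow> t \<in> I))"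

definition ult_equiv :: "nat \<Rightarrow> nat \<Rightarrow> nat set \<Rightarrow> nat \<times> nat option \<Rightarrow> nat \<times> nat option \<Rightarrow> bool" where
  "ult_equiv b p I x y = (\<exists>m\<ge>1. \<forall>u \<in> words b. length u \<ge> m \<longrightarrow> runC b p I x u = runC b p I y u)"

end

theory Submission
  imports Defs
begin

lemma runC_snoc: "runC b p I q (w @ [a]) = stepC b p I (runC b p I q w) a"
  by (simp add: runC_def)

lemma inv_run:
  assumes "\<forall>i. snd q = Some i \<longrightarrow> fst q = i mod p"
  shows "\<forall>i. snd (runC b p I q w) = Some i \<longrightarrow> fst (runC b p I q w) = i mod p"
proof (induction w rule: rev_induct)
  case Nil then show ?case using assms by (simp add: runC_def)
next
  case (snoc a w)
  show ?case
  proof (intro allI impI)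
    fix i assume h: "snd (runC b p I q (w @ [a])) = Some i"
    obtain s t where st: "runC b p I q w = (s, t)" by (cases "runC b p I q w")
    from h st obtain j where t: "t = Some j" and ji: "j * b + a \<le> Max I" "i = j * b + a"
      by (cases t) (auto simp: runC_snoc stepC_def stepB_def split: if_splits)
    have "s = j mod p" using snoc st t by auto
    then show "fst (runC b p I q (w @ [a])) = i mod p"
      using st ji by (simp add: runC_snoc stepC_def stepA_def) (metis mod_add_left_eq mod_mult_left_eq)
  qed
qed

lemma zeros_init: "runC b p I initC (replicate k 0) = initC"
proof (induction k)
  case 0 then show ?case by (simp add: runC_def)
next
  case (Suc k)
  have "replicate (Suc k) (0::nat) = replicate k 0 @ [0]" by (simp add: replicate_append_same)
  then show ?case using Suc by (simp add: runC_snoc stepC_def stepA_def stepB_def initC_def)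
qed

lemma zeros_other:
  assumes "b > 0"
  shows "snd (runC b p I q (replicate k 0)) \<in> {None} \<union> (\<lambda>i. Some (i * b ^ k)) ` {i. snd q = Some i}"
proof (induction k)
  case 0 then show ?case by (cases "snd q") (auto simp: runC_def)
next
  case (Suc k)
  have e: "replicate (Suc k) (0::nat) = replicate k 0 @ [0]" by (simp add: replicate_append_same)
  from Suc show ?case unfolding e
    by (auto simp: runC_snoc stepC_def stepB_def mult.assoc mult.commute)
qed

theorem lemma43:
  fixes b p :: nat and R I :: "nat set" and y :: "nat \<times> nat option"
  assumes "b > 1" and "p \<ge> 1" and "R \<subseteq> {..<p}"
    and "finite I" and "I \<noteq> {}"
    and "y \<in> statesC b p I" and "y \<noteq> initC"
  shows "\<not> ult_equiv b p I initC y"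
proof
  assume "ult_equiv b p I initC y"
  then obtain m where m: "\<forall>u \<in> words b. length u \<ge> m \<longrightarrow> runC b p I initC u = runC b p I y u"
    unfolding ult_equiv_def by blast
  have "replicate m 0 \<in> words b" using assms(1) by (auto simp: words_def)
  then have eq: "runC b p I y (replicate m 0) = initC" using m zeros_init[of b p I m] by force
  obtain w where y: "y = runC b p I initC w" using assms(6) by (auto simp: statesC_def)
  have inv: "\<forall>i. snd y = Some i \<longrightarrow> fst y = i mod p"
    unfolding y by (rule inv_run) (simp add: initC_def)
  show False
  proof (cases "snd y = Some 0")
    case True
    then have "fst y = 0" using inv by simp
    then have "y = initC" using True by (cases y) (simp add: initC_def)
    then show False using assms(7) by simp
  next
    case False
    have "snd (runC b p I y (replicate m 0)) \<in> {None} \<union> (\<lambda>i. Some (i * b ^ m)) ` {i. snd y = Some i}"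
      using assms(1) by (intro zeros_other) simp
    then show False using eq False assms(1) by (auto simp: initC_def)
  qed
qed

end
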